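(* Let $p\in(1,\infty)$ and let $Y$ be a Banach space admitting an equivalent norm with $(\beta)$-modulus of power type $p$. Then there is a constant $C=C(Y)>0$ such that for every integer $h\ge2$, $$c_Y(T^\omega_h)\ge C\,\log(h)^{1/p}.$$
   Context: For a Banach space $X$ with closed unit ball $B_X$ and a sequence $(y_n)_{n\ge1}$ in $X$, let $\mathrm{sep}[(y_n)]:=\inf\{\|y_m-y_n\|: m\neq n\}$. The $(\beta)$-modulus of a norm is $$\overline{\beta}_X(t):=1-\sup\Big\{\inf_{n\ge1}\tfrac{\|x+y_n\|}{2}\ :\ x\in B_X,\ (y_n)_{n\ge1}\subset B_X,\ \mathrm{sep}[(y_n)]\ge t\Big\},$$ and the norm has $(\beta)$-modulus of power type $p$ if there is $c>0$ with $\overline{\beta}_X(t)\ge ct^p$ for all $t\in(0,2]$. For a positive integer $h$, $T^\omega_h$ is the complete countably branching rooted tree of height $h$: every vertex at distance $<h$ from the root has countably infinitely many children, and vertices at distance $h$ from the root are leaves; it carries the unweighted shortest-path metric. The distortion of an injective map $f\colon (M,d_M)\to(N,d_N)$ is $\mathrm{dist}(f)=\mathrm{Lip}(f)\mathrm{Lip}(f^{-1})$, and $c_Y(M):=\inf\{\mathrm{dist}(f): f\colon M\to Y\text{ injective}\}$ (which is $+\infty$ if no bi-Lipschitz embedding exists). *)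

theory Defs
  imports "HOL-Analysis.Analysis"
begin

definition is_norm :: "('a::real_vector \<Rightarrow> real) \<Rightarrow> bool" where
  "is_norm N \<longleftrightarrow> (\<forall>x. N x = 0 \<longleftrightarrow> x = 0) \<and> (\<forall>x y. N (x + y) \<le> N x + N y)
     \<and> (\<forall>r x. N (r *\<^sub>R x) = \<bar>r\<bar> * N x)"

definition equivalent_norm :: "('a::real_normed_vector \<Rightarrow> real) \<Rightarrow> bool" where
  "equivalent_norm N \<longleftrightarrow> is_norm N \<and>
     (\<exists>a b. 0 < a \<and> 0 < b \<and> (\<forall>x. a * norm x \<le> N x \<and> N x \<le> b * norm x))"

definition sep :: "('a::real_vector \<Rightarrow> real) \<Rightarrow> (nat \<Rightarrow> 'a) \<Rightarrow> real" where
  "sep N y = Inf {N (y m - y n) | m n. 1 \<le> m \<and> 1 \<le> n \<and> m \<noteq> n}"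

text \<open>The (beta)-modulus of the norm N (sup of the empty set is -\<infinity>).\<close>
definition beta_modulus :: "('a::real_vector \<Rightarrow> real) \<Rightarrow> real \<Rightarrow> ereal" where
  "beta_modulus N t = 1 - Sup {ereal (Inf {N (x + y n) / 2 | n. 1 \<le> n}) | x y.
       N x \<le> 1 \<and> (\<forall>n\<ge>1. N (y n) \<le> 1) \<and> sep N y \<ge> t}"

definition beta_power_type :: "('a::real_vector \<Rightarrow> real) \<Rightarrow> real \<Rightarrow> bool" where
  "beta_power_type N p \<longleftrightarrow> (\<exists>c>0. \<forall>t. 0 < t \<and> t \<le> 2 \<longrightarrow> beta_modulus N t \<ge> ereal (c * t powr p))"

text \<open>The countably branching tree of height h: vertices are finite sequences of
  naturals of length at most h (the root is []); children of xs are xs @ [k].\<close>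
definition tree :: "nat \<Rightarrow> nat list set" where
  "tree h = {xs. length xs \<le> h}"

fun lcp :: "nat list \<Rightarrow> nat list \<Rightarrow> nat" where
  "lcp (x # xs) (y # ys) = (if x = y then Suc (lcp xs ys) else 0)"
| "lcp _ _ = 0"

definition tree_dist :: "nat list \<Rightarrow> nat list \<Rightarrow> real" where
  "tree_dist xs ys = real (length xs + length ys - 2 * lcp xs ys)"

definition lip_tree :: "nat \<Rightarrow> (nat list \<Rightarrow> 'a::real_normed_vector) \<Rightarrow> ereal" where
  "lip_tree h f = (SUP (u, v) \<in> {(u, v). u \<in> tree h \<and> v \<in> tree h \<and> u \<noteq> v}.
      ereal (norm (f u - f v) / tree_dist u v))"

definition lip_inv_tree :: "nat \<Rightarrow> (nat list \<Rightarrow> 'a::real_normed_vector) \<Rightarrow> ereal" where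
  "lip_inv_tree h f = (SUP (u, v) \<in> {(u, v). u \<in> tree h \<and> v \<in> tree h \<and> u \<noteq> v}.
      ereal (tree_dist u v / norm (f u - f v)))"

definition distortion_tree :: "nat \<Rightarrow> (nat list \<Rightarrow> 'a::real_normed_vector) \<Rightarrow> ereal" where
  "distortion_tree h f = lip_tree h f * lip_inv_tree h f"

text \<open>c_Y(T^omega_h); the infimum over the empty set is +\<infinity>.\<close>
definition cY_tree :: "'a::real_normed_vector itself \<Rightarrow> nat \<Rightarrow> ereal" where
  "cY_tree _ h = Inf {distortion_tree h f | f :: nat list \<Rightarrow> 'a. inj_on f (tree h)}"

end

theory Submission imports Defs begin

lemma N_nonneg: assumes "is_norm N" shows "0 \<le> N x"
proof -
  have "N (x + (-x)) \<le> N x + N (-x)" using assms unfolding is_norm_def by blast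
  moreover have "N (-x) = N x" using assms unfolding is_norm_def
    by (metis abs_minus_cancel abs_one mult_1 scaleR_minus1_left)
  moreover have "N 0 = 0" using assms unfolding is_norm_def by blast
  ultimately show ?thesis by simp
qed

lemma N_scale: assumes "is_norm N" shows "N (r *\<^sub>R x) = \<bar>r\<bar> * N x"
  using assms unfolding is_norm_def by blast

lemma N_add: assumes "is_norm N" shows "N (x + y) \<le> N x + N y"
  using assms unfolding is_norm_def by blast

lemma fork:
  assumes "is_norm N" "beta_modulus N t \<ge> ereal b" "b > 0"
    "N x \<le> 1" "\<forall>n\<ge>1. N (y n) \<le> 1" "sep N y \<ge> t"
  shows "\<exists>n\<ge>1. N (x + y n) / 2 < 1 - b/2"
proof -
  define I where "I = {N (x + y n) / 2 | n. 1 \<le> n}"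
  define S where "S = {ereal (Inf {N (x + y n) / 2 | n. 1 \<le> n}) | x y.
       N x \<le> 1 \<and> (\<forall>n\<ge>1. N (y n) \<le> 1) \<and> sep N y \<ge> t}"
  have "ereal (Inf I) \<in> S" unfolding S_def I_def using assms by blast
  hence "ereal (Inf I) \<le> Sup S" by (rule Sup_upper)
  hence "1 - Sup S \<le> 1 - ereal (Inf I)" by (intro ereal_minus_mono) auto
  moreover have "beta_modulus N t = 1 - Sup S" unfolding beta_modulus_def S_def by simp
  ultimately have "ereal b \<le> 1 - ereal (Inf I)" using assms(2) by (metis order_trans)
  hence "ereal b \<le> ereal (1 - Inf I)" by (simp add: one_ereal_def)
  hence "Inf I < 1 - b/2" using assms(3) by simp
  moreover have "N (x + y 1) / 2 \<in> I" unfolding I_def by blast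
  hence "I \<noteq> {}" by blast
  moreover have "bdd_below I" unfolding I_def bdd_below_def
    using N_nonneg[OF assms(1)] by (intro exI[of _ 0]) fastforce
  ultimately obtain z where "z \<in> I" "z < 1 - b/2" using cInf_less_iff by blast
  thus ?thesis unfolding I_def by auto
qed

lemma lcp_append: "lcp (xs @ ys) (xs @ zs) = length xs + lcp ys zs"
  by (induction xs) auto

lemma lcp_Nil: "lcp [] ys = 0" by simp

lemma dist_desc: "tree_dist u (u @ w) = real (length w)"
  unfolding tree_dist_def using lcp_append[of u "[]" w] by simp

lemma dist_desc': "tree_dist (u @ w) u = real (length w)"
  unfolding tree_dist_def using lcp_append[of u w "[]"]
  by simp

lemma dist_branch: "m \<noteq> n \<Longrightarrow> tree_dist (x @ m # a) (x @ n # b) = real (length a + length b + 2)"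
  unfolding tree_dist_def using lcp_append[of x "m # a" "n # b"] by simp

lemma claim:
  fixes g :: "nat list \<Rightarrow> 'a::real_vector"
  assumes p: "1 < p" and nN: "is_norm N" and c: "c > 0"
    and md: "\<forall>t. 0 < t \<and> t \<le> 2 \<longrightarrow> beta_modulus N t \<ge> ereal (c * t powr p)"
    and D: "D \<ge> 0"
    and low: "\<forall>u v. length u \<le> h \<longrightarrow> length v \<le> h \<longrightarrow> tree_dist u v \<le> N (g u - g v)"
    and up: "\<forall>u v. length u \<le> h \<longrightarrow> length v \<le> h \<longrightarrow> N (g u - g v) \<le> D * tree_dist u v"
  shows "length u + 2^j \<le> h \<Longrightarrow> \<exists>w. length w + 1 = 2^j \<and>
     (N (g (u @ k # w) - g u) / 2^j) powr p \<le> D powr p - c * 2 powr p / 2 * real j"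
proof (induction j arbitrary: u k)
  case 0
  have "N (g (u @ [k]) - g u) \<le> D * tree_dist (u @ [k]) u"
    using up 0 by simp
  also have "tree_dist (u @ [k]) u = 1" using dist_desc'[of u "[k]"] by simp
  finally have "N (g (u @ [k]) - g u) powr p \<le> D powr p"
    using N_nonneg[OF nN] p by (intro powr_mono2) auto
  then show ?case by (intro exI[of _ "[]"]) simp
next
  case (Suc j)
  define \<gamma> where "\<gamma> = c * 2 powr p / 2"
  define B where "B = D powr p - \<gamma> * real j"
  have hj: "length u + 2^j \<le> h" using Suc.prems by simp
  obtain w1 where w1: "length w1 + 1 = 2^j"
     "(N (g (u @ k # w1) - g u) / 2^j) powr p \<le> B"
    using Suc.IH[OF hj, of k] unfolding B_def \<gamma>_def by blast
  define x1 where "x1 = u @ k # w1"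
  have lx1: "length x1 = length u + 2^j" using w1 unfolding x1_def by simp
  have rw1: "real (length w1) + 1 = 2^j" using arg_cong[OF w1(1), of real] by simp
  have rW: "real (length ws) + 1 = 2^j" if "length ws + 1 = 2^j" for ws :: "nat list"
    using arg_cong[OF that, of real] by simp
  have "tree_dist x1 u \<le> N (g x1 - g u)" using low lx1 hj by simp
  moreover have "tree_dist x1 u = 2^j" using dist_desc'[of u "k # w1"] rw1 unfolding x1_def by simp
  ultimately have r1: "1 \<le> N (g x1 - g u) / 2^j" by simp
  hence B1: "1 \<le> B" using w1(2) p unfolding x1_def[symmetric]
    by (meson ge_one_powr_ge_zero less_imp_le order_trans zero_le_one)
  define \<rho> where "\<rho> = B powr (1/p)"
  have rho1: "1 \<le> \<rho>" unfolding \<rho>_def using B1 p by (intro ge_one_powr_ge_zero) auto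
  have rhop: "\<rho> powr p = B" unfolding \<rho>_def using B1 p by (simp add: powr_powr)
  have ratio: "N (g v - g w) \<le> \<rho> * 2^j" if "(N (g v - g w) / 2^j) powr p \<le> B" for v w
  proof -
    have "N (g v - g w) / 2^j = ((N (g v - g w) / 2^j) powr p) powr (1/p)"
      using p N_nonneg[OF nN] by (simp add: powr_powr)
    also have "\<dots> \<le> \<rho>" unfolding \<rho>_def using that p by (intro powr_mono2) auto
    finally show ?thesis by (simp add: field_simps)
  qed
  have n1: "N (g x1 - g u) \<le> \<rho> * 2^j" using ratio w1(2) unfolding x1_def by blast
  have "\<forall>n. \<exists>w. length w + 1 = 2^j \<and> (N (g (x1 @ n # w) - g x1) / 2^j) powr p \<le> B"
    using Suc.IH[of x1] lx1 Suc.prems unfolding B_def \<gamma>_def by simp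
  then obtain W where W: "\<And>n. length (W n) + 1 = 2^j"
    "\<And>n. (N (g (x1 @ n # W n) - g x1) / 2^j) powr p \<le> B" by metis
  define x2 where "x2 n = x1 @ n # W n" for n
  have lx2: "length (x2 n) = length u + 2^Suc j" for n using W(1)[of n] lx1 unfolding x2_def by simp
  have n2: "N (g (x2 n) - g x1) \<le> \<rho> * 2^j" for n using ratio W(2) unfolding x2_def by blast
  define R where "R = \<rho> * 2^j"
  have R0: "R > 0" unfolding R_def using rho1 by simp
  define X where "X = (1/R) *\<^sub>R (g x1 - g u)"
  define Y where "Y n = (1/R) *\<^sub>R (g (x2 n) - g x1)" for n
  have NX: "N X \<le> 1" unfolding X_def using N_scale[OF nN] n1 R0 R_def by simp
  have NY: "\<forall>n\<ge>1. N (Y n) \<le> 1" unfolding Y_def using N_scale[OF nN] n2 R0 R_def by simp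
  have sepY: "sep N Y \<ge> 2 / \<rho>" unfolding sep_def
  proof (rule cInf_greatest)
    show "{N (Y m - Y n) |m n. 1 \<le> m \<and> 1 \<le> n \<and> m \<noteq> n} \<noteq> {}"
      by (rule ccontr) (auto dest: spec[of _ "N (Y 1 - Y 2)"])
  next
    fix z assume "z \<in> {N (Y m - Y n) |m n. 1 \<le> m \<and> 1 \<le> n \<and> m \<noteq> n}"
    then obtain m n where mn: "m \<noteq> n" "z = N (Y m - Y n)" by blast
    have "Y m - Y n = (1/R) *\<^sub>R (g (x2 m) - g (x2 n))"
      unfolding Y_def by (simp add: algebra_simps)
    hence z: "z = N (g (x2 m) - g (x2 n)) / R" using mn N_scale[OF nN] R0 by simp
    have "tree_dist (x2 m) (x2 n) = 2 * 2^j"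
      unfolding x2_def using dist_branch[OF mn(1), of x1 "W m" "W n"] rW[OF W(1)[of m]] rW[OF W(1)[of n]]
      by simp
    hence "2 * 2^j \<le> N (g (x2 m) - g (x2 n))" using low lx2 Suc.prems by metis
    hence "2 * 2^j / R \<le> z" unfolding z using R0 by (simp add: divide_right_mono)
    moreover have "2 * 2^j / R = 2 / \<rho>" unfolding R_def using rho1 by simp
    ultimately show "2 / \<rho> \<le> z" by simp
  qed
  define t where "t = 2 / \<rho>"
  have t: "0 < t" "t \<le> 2" unfolding t_def using rho1 by (auto simp: field_simps)
  define b where "b = c * t powr p"
  have b0: "b > 0" unfolding b_def using c t by simp
  have "beta_modulus N t \<ge> ereal b" using md t unfolding b_def by blast
  from fork[OF nN this b0 NX NY sepY[folded t_def]]
  obtain n where n: "N (X + Y n) / 2 < 1 - b/2" by blast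
  have "X + Y n = (1/R) *\<^sub>R (g (x2 n) - g u)" unfolding X_def Y_def by (simp add: algebra_simps)
  hence "N (X + Y n) = N (g (x2 n) - g u) / R" using N_scale[OF nN] R0 by simp
  have "b / 2 = \<gamma> / B" unfolding b_def \<gamma>_def t_def using rho1 rhop
    by (simp add: powr_divide)
  define r where "r = N (g (x2 n) - g u) / 2^Suc j"
  have rlt: "r < \<rho> * (1 - \<gamma> / B)"
  proof -
    define M where "M = N (g (x2 n) - g u)"
    have "M / R / 2 < 1 - \<gamma> / B" using n \<open>N (X + Y n) = _\<close> \<open>b / 2 = \<gamma> / B\<close>
      unfolding M_def by simp
    hence "M < R * 2 * (1 - \<gamma> / B)" using R0 by (simp add: field_simps)
    hence "M / 2^Suc j < R * 2 * (1 - \<gamma> / B) / 2^Suc j"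
      by (intro divide_strict_right_mono) auto
    also have "R * 2 * (1 - \<gamma> / B) / 2^Suc j = \<rho> * (1 - \<gamma> / B)" unfolding R_def by simp
    finally show ?thesis unfolding r_def M_def .
  qed
  have "tree_dist (x2 n) u = 2^Suc j" using dist_desc'[of u "k # w1 @ n # W n"] rW[OF W(1)[of n]] rw1
    unfolding x2_def x1_def by simp
  hence "2^Suc j \<le> N (g (x2 n) - g u)" using low[rule_format, of "x2 n" u] lx2[of n] Suc.prems by simp
  hence r1: "1 \<le> r" unfolding r_def by simp
  have q0: "0 < 1 - \<gamma> / B" using rlt r1 rho1
    by (smt (verit) mult_nonneg_nonpos)
  have q1: "1 - \<gamma> / B \<le> 1" unfolding \<gamma>_def using c B1 by simp
  have "r powr p \<le> (\<rho> * (1 - \<gamma> / B)) powr p" using rlt r1 p by (intro powr_mono2) auto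
  also have "\<dots> = B * (1 - \<gamma> / B) powr p" using rhop rho1 q0 by (simp add: powr_mult)
  also have "\<dots> \<le> B * (1 - \<gamma> / B) powr 1" using q0 q1 p B1
    by (intro mult_left_mono powr_mono') auto
  also have "\<dots> = B - \<gamma>" using q0 B1 by (simp add: field_simps)
  finally have "r powr p \<le> D powr p - c * 2 powr p / 2 * real (Suc j)"
    unfolding B_def \<gamma>_def by (simp add: algebra_simps add_divide_distrib)
  moreover have "u @ k # (w1 @ n # W n) = x2 n" unfolding x2_def x1_def by simp
  ultimately show ?case using W(1)[of n] w1(1) unfolding r_def
    by (intro exI[of _ "w1 @ n # W n"]) simp
qed


lemma bound:
  fixes g :: "nat list \<Rightarrow> 'a::real_vector"
  assumes p: "1 < p" and nN: "is_norm N" and c: "c > 0"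
    and md: "\<forall>t. 0 < t \<and> t \<le> 2 \<longrightarrow> beta_modulus N t \<ge> ereal (c * t powr p)"
    and D: "D \<ge> 0" and h: "2 \<le> h"
    and low: "\<forall>u v. length u \<le> h \<longrightarrow> length v \<le> h \<longrightarrow> tree_dist u v \<le> N (g u - g v)"
    and up: "\<forall>u v. length u \<le> h \<longrightarrow> length v \<le> h \<longrightarrow> N (g u - g v) \<le> D * tree_dist u v"
  shows "(c * 2 powr p / (4 * ln 2)) powr (1/p) * ln (real h) powr (1/p) \<le> D"
proof -
  obtain j where j: "2^j \<le> h" "h < 2^(j+1)" using ex_power_ivl1[of 2 h] h by auto
  have j1: "1 \<le> j" using j h by (cases j) auto
  obtain w where w: "(N (g ([] @ 0 # w) - g []) / 2^j) powr p \<le> D powr p - c * 2 powr p / 2 * real j"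
    "length w + 1 = 2^j"
    using claim[OF p nN c md D low up, of "[]" j 0] j by auto
  have "real (length w) + 1 = 2^j" using arg_cong[OF w(2), of real] by simp
  hence "tree_dist (0 # w) [] = 2^j" using dist_desc'[of "[]" "0 # w"] by simp
  hence "2^j \<le> N (g (0 # w) - g [])" using low[rule_format, of "0 # w" "[]"] w(2) j by simp
  hence "1 \<le> N (g (0 # w) - g []) / 2^j" by simp
  hence "1 \<le> (N (g (0 # w) - g []) / 2^j) powr p" using p by (intro ge_one_powr_ge_zero) auto
  with w(1) have Dp: "c * 2 powr p / 2 * real j \<le> D powr p" by simp
  have "real h < real (2^(j+1))" using j(2) by (simp only: of_nat_less_iff)
  hence "ln (real h) < ln (2^(j+1))" using h by (subst ln_less_cancel_iff) auto
  also have "\<dots> = real (j+1) * ln 2" by (rule ln_realpow)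
  also have "\<dots> \<le> 2 * real j * ln 2" using j1 by (intro mult_right_mono) auto
  finally have lnh: "ln (real h) \<le> 2 * real j * ln 2" by simp
  define K where "K = c * 2 powr p / (4 * ln 2)"
  have K0: "K > 0" unfolding K_def using c by simp
  have "K * ln (real h) \<le> K * (2 * real j * ln 2)" using K0 lnh by (intro mult_left_mono) auto
  also have "\<dots> = c * 2 powr p / 2 * real j" unfolding K_def by (simp add: field_simps)
  finally have "K * ln (real h) \<le> D powr p" using Dp by simp
  have lnh0: "0 \<le> ln (real h)" using h by simp
  have "K powr (1/p) * ln (real h) powr (1/p) = (K * ln (real h)) powr (1/p)"
    using K0 lnh0 by (simp add: powr_mult)
  also have "\<dots> \<le> (D powr p) powr (1/p)" using \<open>K * ln (real h) \<le> D powr p\<close> K0 lnh0 p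
    by (intro powr_mono2) auto
  also have "\<dots> = D" using D p by (simp add: powr_powr)
  finally show ?thesis unfolding K_def .
qed

lemma lcp_self: "lcp u u = length u" by (induction u) auto

lemma lcp_lt: "u \<noteq> v \<Longrightarrow> 2 * lcp u v < length u + length v"
  by (induction u v rule: lcp.induct) auto

lemma tree_dist_pos: "u \<noteq> v \<Longrightarrow> tree_dist u v > 0"
  unfolding tree_dist_def using lcp_lt[of u v] by simp

lemma tree_dist_self: "tree_dist u u = 0"
  unfolding tree_dist_def lcp_self by simp


theorem theorem2:
  fixes p :: real and N :: "'a::banach \<Rightarrow> real"
  assumes "1 < p"
    and "equivalent_norm N"
    and "beta_power_type N p"
  shows "\<exists>C>0. \<forall>h::nat. 2 \<le> h \<longrightarrow>
           cY_tree TYPE('a) h \<ge> ereal (C * ln (real h) powr (1 / p))"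
proof -
  obtain a b where nN: "is_norm N" and ab: "0 < a" "0 < b"
    and Nab: "\<And>x. a * norm x \<le> N x \<and> N x \<le> b * norm x"
    using assms(2) unfolding equivalent_norm_def by blast
  obtain c where c: "c > 0"
    and md: "\<forall>t. 0 < t \<and> t \<le> 2 \<longrightarrow> beta_modulus N t \<ge> ereal (c * t powr p)"
    using assms(3) unfolding beta_power_type_def by blast
  define K where "K = (c * 2 powr p / (4 * ln 2)) powr (1/p)"
  have K0: "K > 0" unfolding K_def using c by simp
  define C where "C = a / b * K"
  have C0: "C > 0" unfolding C_def using ab K0 by simp
  show ?thesis
  proof (intro exI[of _ C] conjI allI impI C0)
    fix h :: nat assume h: "2 \<le> h"
    show "ereal (C * ln (real h) powr (1 / p)) \<le> cY_tree TYPE('a) h"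
      unfolding cY_tree_def
    proof (rule Inf_greatest, clarify)
      fix f :: "nat list \<Rightarrow> 'a" assume inj: "inj_on f (tree h)"
      define P where "P = {(u, v). u \<in> tree h \<and> v \<in> tree h \<and> u \<noteq> v}"
      have Pmem: "([], [0]) \<in> P" unfolding P_def tree_def using h by auto
      have f0: "f [] \<noteq> f [0]" using inj Pmem unfolding P_def inj_on_def by auto
      have d0: "tree_dist [] [0] = 1" using dist_desc[of "[]" "[0]"] by simp
      define L where "L = lip_tree h f"
      define Li where "Li = lip_inv_tree h f"
      have Lge: "ereal (norm (f u - f v) / tree_dist u v) \<le> L" if "(u, v) \<in> P" for u v
        unfolding L_def lip_tree_def P_def[symmetric]
        using that by (rule SUP_upper2) auto
      have Lige: "ereal (tree_dist u v / norm (f u - f v)) \<le> Li" if "(u, v) \<in> P" for u v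
        unfolding Li_def lip_inv_tree_def P_def[symmetric]
        using that by (rule SUP_upper2) auto
      have np: "norm (f [] - f [0]) > 0" using f0 by simp
      have L0: "L > 0"
      proof -
        have "ereal 0 < ereal (norm (f [] - f [0]) / tree_dist [] [0])" using np d0 by simp
        thus ?thesis using Lge[OF Pmem] zero_ereal_def by (metis less_le_trans)
      qed
      have Li0: "Li > 0"
      proof -
        have "ereal 0 < ereal (tree_dist [] [0] / norm (f [] - f [0]))" using np d0 by simp
        thus ?thesis using Lige[OF Pmem] zero_ereal_def by (metis less_le_trans)
      qed
      have goal: "ereal (C * ln (real h) powr (1 / p)) \<le> L * Li"
      proof (cases "L = \<infinity> \<or> Li = \<infinity>")
        case True
        hence "L * Li = \<infinity>" using L0 Li0 by auto
        thus ?thesis by (metis ereal_less_eq(1))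
      next
        case False
        then obtain l li where l: "L = ereal l" and li: "Li = ereal li"
          using L0 Li0 by (metis ereal_infty_less(2) ereal_cases less_ereal.simps(2)
            ereal_less(4) not_less_iff_gr_or_eq)
        have l0: "l > 0" "li > 0" using L0 Li0 l li by auto
        have upn: "norm (f u - f v) \<le> l * tree_dist u v" if "(u, v) \<in> P" for u v
        proof -
          have "norm (f u - f v) / tree_dist u v \<le> l" using Lge[OF that] l by simp
          moreover have "tree_dist u v > 0" using that tree_dist_pos unfolding P_def by auto
          ultimately show ?thesis by (simp add: divide_le_eq mult.commute)
        qed
        have lown: "tree_dist u v \<le> li * norm (f u - f v)" if "(u, v) \<in> P" for u v
        proof -
          have "tree_dist u v / norm (f u - f v) \<le> li" using Lige[OF that] li by simp
          moreover have "f u \<noteq> f v" using that inj unfolding P_def inj_on_def by auto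
          hence "norm (f u - f v) > 0" by simp
          ultimately show ?thesis by (simp add: divide_le_eq mult.commute)
        qed
        define g where "g u = (li / a) *\<^sub>R f u" for u
        have gdiff: "N (g u - g v) = li / a * N (f u - f v)" for u v
          using N_scale[OF nN, of "li / a" "f u - f v"] l0 ab unfolding g_def
          by (simp add: scaleR_diff_right)
        define D where "D = b / a * l * li"
        have D0: "D \<ge> 0" unfolding D_def using l0 ab by simp
        have low: "\<forall>u v. length u \<le> h \<longrightarrow> length v \<le> h \<longrightarrow> tree_dist u v \<le> N (g u - g v)"
        proof (intro allI impI)
          fix u v :: "nat list" assume uv: "length u \<le> h" "length v \<le> h"
          show "tree_dist u v \<le> N (g u - g v)"
          proof (cases "u = v")
            case True thus ?thesis using tree_dist_self N_nonneg[OF nN] by simp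
          next
            case False
            hence "(u, v) \<in> P" unfolding P_def tree_def using uv by auto
            hence "tree_dist u v \<le> li * norm (f u - f v)" by (rule lown)
            also have "\<dots> \<le> li * (N (f u - f v) / a)"
              using Nab[of "f u - f v"] ab l0 by (intro mult_left_mono) (auto simp: field_simps)
            also have "\<dots> = N (g u - g v)" unfolding gdiff by simp
            finally show ?thesis .
          qed
        qed
        have up: "\<forall>u v. length u \<le> h \<longrightarrow> length v \<le> h \<longrightarrow> N (g u - g v) \<le> D * tree_dist u v"
        proof (intro allI impI)
          fix u v :: "nat list" assume uv: "length u \<le> h" "length v \<le> h"
          show "N (g u - g v) \<le> D * tree_dist u v"
          proof (cases "u = v")
            case True
            have "N 0 = 0" using nN unfolding is_norm_def by blast
            thus ?thesis using True tree_dist_self by simp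
          next
            case False
            hence P: "(u, v) \<in> P" unfolding P_def tree_def using uv by auto
            have "N (g u - g v) = li / a * N (f u - f v)" by (rule gdiff)
            also have "\<dots> \<le> li / a * (b * norm (f u - f v))"
              using Nab[of "f u - f v"] ab l0 by (intro mult_left_mono) auto
            also have "\<dots> \<le> li / a * (b * (l * tree_dist u v))"
              using upn[OF P] ab l0 by (intro mult_left_mono) auto
            also have "\<dots> = D * tree_dist u v" unfolding D_def by simp
            finally show ?thesis .
          qed
        qed
        have "K * ln (real h) powr (1/p) \<le> D"
          using bound[OF assms(1) nN c md D0 h low up] unfolding K_def .
        hence "a / b * (K * ln (real h) powr (1/p)) \<le> a / b * D"
          using ab by (intro mult_left_mono) auto
        also have "a / b * D = l * li" unfolding D_def using ab by simp
        finally show ?thesis unfolding l li C_def by (simp add: mult.assoc)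
      qed
      show "ereal (C * ln (real h) powr (1 / p)) \<le> distortion_tree h f"
        unfolding distortion_tree_def using goal unfolding L_def Li_def .
    qed
  qed
qed

end
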